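(* Let $n\ge1$, let $A\in\mathbb{C}^{2n\times 2n}$ be Hamiltonian, and let $f$ and $\operatorname{grad} f$ be as in the context. Then for every unitary symplectic $Z\in\mathbb{C}^{2n\times 2n}$ there exist a symplectic rotation $R(i,j,\phi,\alpha)$ of one of the three types (R1), (R2), (R3) (with admissible pivot pair $(i,j)$ for that type) and an angle $\alpha$ such that $$\big|\langle \operatorname{grad} f(Z),\, Z\dot R(i,j,0,\alpha)\rangle_{\mathbb{R}}\big|\ \ge\ \eta\,\|\operatorname{grad} f(Z)\|_F,\qquad \eta=\frac{2}{\sqrt{4n^2-2n}},$$ where $\dot R(i,j,0,\alpha)=\frac{\partial}{\partial\phi}R(i,j,\phi,\alpha)\big|_{\phi=0}$.
   Context: $J=J_{2n}=\begin{bmatrix}0&I_n\\-I_n&0\end{bmatrix}$; $A$ is Hamiltonian if $(JA)^H=JA$; $Z$ is symplectic if $Z^HJZ=J$. $f(Z)=\|\operatorname{diag}(Z^HAZ)\|_F^2=\sum_{j}|\langle AZe_j,Ze_j\rangle|^2$ on the manifold $\mathcal{M}$ of unitary symplectic matrices; $\langle X,Y\rangle_{\mathbb{R}}=\operatorname{Re}\operatorname{tr}(X^HY)$; $\operatorname{grad} f(Z)$ is the orthogonal projection of the Euclidean gradient $\big[\partial\tilde f/\partial\operatorname{Re}z_{jk}+\imath\,\partial\tilde f/\partial\operatorname{Im}z_{jk}\big]$ of $\tilde f(Z)=\sum_j|\langle AZe_j,Ze_j\rangle|^2$ onto $T_Z\mathcal{M}=\{ZK: K\text{ skew-Hermitian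 Hamiltonian}\}$. Write $c=\cos\phi$, $s=e^{\imath\alpha}\sin\phi$. All rotations equal $I_{2n}$ except in the listed entries: (R1) for $1\le i\le n$, $j=n+i$ (and $\alpha=0$): $R_{ii}=R_{n+i,n+i}=\cos\phi$, $R_{i,n+i}=-\sin\phi$, $R_{n+i,i}=\sin\phi$. (R2) for $1\le i<j\le n$: $R_{ii}=R_{jj}=R_{n+i,n+i}=R_{n+j,n+j}=c$, $R_{ij}=R_{n+i,n+j}=-s$, $R_{ji}=R_{n+j,n+i}=\bar s$. (R3) for $1\le i\le n$, $n+i<j\le 2n$ (so $i<j-n\le n$): $R_{ii}=R_{j-n,j-n}=R_{n+i,n+i}=R_{jj}=c$, $R_{ij}=-s$, $R_{j-n,n+i}=-\bar s$, $R_{n+i,j-n}=s$, $R_{ji}=\bar s$. Each such $R(i,j,\phi,\alpha)$ is unitary symplectic. *)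

theory Defs
  imports "HOL-Analysis.Analysis" "Jordan_Normal_Form.Matrix"
begin

text \<open>All matrices are complex 2n x 2n matrices (Jordan_Normal_Form mat, 0-based indices).
  Paper indices 1..2n are mapped to 0..2n-1 by subtracting 1.\<close>

definition ctrans :: "complex mat \<Rightarrow> complex mat" where
  "ctrans X = transpose_mat (map_mat cnj X)"

definition Jmat :: "nat \<Rightarrow> complex mat" where
  "Jmat n = mat (2*n) (2*n) (\<lambda>(r,c).
      if r < n \<and> c = r + n then 1 else if n \<le> r \<and> c = r - n then -1 else 0)"

definition hamiltonian :: "nat \<Rightarrow> complex mat \<Rightarrow> bool" where
  "hamiltonian n A \<longleftrightarrow> A \<in> carrier_mat (2*n) (2*n) \<and> ctrans (Jmat n * A) = Jmat n * A"

definition symplectic :: "nat \<Rightarrow> complex mat \<Rightarrow> bool" where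
  "symplectic n Z \<longleftrightarrow> Z \<in> carrier_mat (2*n) (2*n) \<and> ctrans Z * Jmat n * Z = Jmat n"

definition unitary :: "nat \<Rightarrow> complex mat \<Rightarrow> bool" where
  "unitary n Z \<longleftrightarrow> Z \<in> carrier_mat (2*n) (2*n) \<and> ctrans Z * Z = 1\<^sub>m (2*n)"

definition unitary_symplectic :: "nat \<Rightarrow> complex mat \<Rightarrow> bool" where
  "unitary_symplectic n Z \<longleftrightarrow> unitary n Z \<and> symplectic n Z"

definition rinner :: "complex mat \<Rightarrow> complex mat \<Rightarrow> real" where
  "rinner X Y = (\<Sum>k<dim_col (ctrans X * Y). Re ((ctrans X * Y) $$ (k,k)))"

definition fro_norm :: "complex mat \<Rightarrow> real" where
  "fro_norm X = sqrt (\<Sum>r<dim_row X. \<Sum>c<dim_col X. (cmod (X $$ (r,c)))\<^sup>2)"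

text \<open>The objective f~(Z) = sum_j |<A Z e_j, Z e_j>|^2 = sum_j |(Z^H A Z)_jj|^2, on all of C^{2n x 2n}.\<close>
definition ftil :: "nat \<Rightarrow> complex mat \<Rightarrow> complex mat \<Rightarrow> real" where
  "ftil n A Z = (\<Sum>j<2*n. (cmod ((ctrans Z * A * Z) $$ (j,j)))\<^sup>2)"

definition unit_mat :: "nat \<Rightarrow> nat \<Rightarrow> nat \<Rightarrow> complex mat" where
  "unit_mat n j k = mat (2*n) (2*n) (\<lambda>(r,c). if r = j \<and> c = k then 1 else 0)"

definition egrad :: "nat \<Rightarrow> complex mat \<Rightarrow> complex mat \<Rightarrow> complex mat" where
  "egrad n A Z = mat (2*n) (2*n) (\<lambda>(j,k).
      complex_of_real (deriv (\<lambda>t::real. ftil n A (Z + complex_of_real t \<cdot>\<^sub>m unit_mat n j k)) 0)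
      + \<i> * complex_of_real (deriv (\<lambda>t::real. ftil n A (Z + (\<i> * complex_of_real t) \<cdot>\<^sub>m unit_mat n j k)) 0))"

definition tangent :: "nat \<Rightarrow> complex mat \<Rightarrow> complex mat set" where
  "tangent n Z = {Z * K | K. K \<in> carrier_mat (2*n) (2*n) \<and> ctrans K = - K \<and> hamiltonian n K}"

definition grad_f :: "nat \<Rightarrow> complex mat \<Rightarrow> complex mat \<Rightarrow> complex mat" where
  "grad_f n A Z = (THE P. P \<in> tangent n Z \<and>
      (\<forall>X \<in> tangent n Z. rinner (egrad n A Z - P) X = 0))"

datatype rot_type = R1 | R2 | R3

text \<open>Admissible pivot pairs (paper's 1-based indices) for each rotation type.\<close>
definition admissible :: "nat \<Rightarrow> rot_type \<Rightarrow> nat \<Rightarrow> nat \<Rightarrow> real \<Rightarrow> bool" where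
  "admissible n t i j \<alpha> = (case t of
      R1 \<Rightarrow> 1 \<le> i \<and> i \<le> n \<and> j = n + i \<and> \<alpha> = 0
    | R2 \<Rightarrow> 1 \<le> i \<and> i < j \<and> j \<le> n
    | R3 \<Rightarrow> 1 \<le> i \<and> i \<le> n \<and> n + i < j \<and> j \<le> 2*n)"

definition rot_entry :: "nat \<Rightarrow> rot_type \<Rightarrow> nat \<Rightarrow> nat \<Rightarrow> real \<Rightarrow> real \<Rightarrow> nat \<Rightarrow> nat \<Rightarrow> complex" where
  "rot_entry n t i j \<phi> \<alpha> p q = (
     let c = complex_of_real (cos \<phi>);
         s = cis \<alpha> * complex_of_real (sin \<phi>)
     in case t of
       R1 \<Rightarrow> (if (p = i \<and> q = i) \<or> (p = n+i \<and> q = n+i) then complex_of_real (cos \<phi>)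
              else if p = i \<and> q = n+i then - complex_of_real (sin \<phi>)
              else if p = n+i \<and> q = i then complex_of_real (sin \<phi>)
              else if p = q then 1 else 0)
     | R2 \<Rightarrow> (if (p = i \<and> q = i) \<or> (p = j \<and> q = j) \<or> (p = n+i \<and> q = n+i) \<or> (p = n+j \<and> q = n+j) then c
              else if (p = i \<and> q = j) \<or> (p = n+i \<and> q = n+j) then - s
              else if (p = j \<and> q = i) \<or> (p = n+j \<and> q = n+i) then cnj s
              else if p = q then 1 else 0)
     | R3 \<Rightarrow> (if (p = i \<and> q = i) \<or> (p = j-n \<and> q = j-n) \<or> (p = n+i \<and> q = n+i) \<or> (p = j \<and> q = j) then c
              else if p = i \<and> q = j then - s
              else if p = j-n \<and> q = n+i then - cnj s
              else if p = n+i \<and> q = j-n then s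
              else if p = j \<and> q = i then cnj s
              else if p = q then 1 else 0))"

definition rot :: "nat \<Rightarrow> rot_type \<Rightarrow> nat \<Rightarrow> nat \<Rightarrow> real \<Rightarrow> real \<Rightarrow> complex mat" where
  "rot n t i j \<phi> \<alpha> = mat (2*n) (2*n) (\<lambda>(r,c). rot_entry n t i j \<phi> \<alpha> (r+1) (c+1))"

definition rot_dot :: "nat \<Rightarrow> rot_type \<Rightarrow> nat \<Rightarrow> nat \<Rightarrow> real \<Rightarrow> complex mat" where
  "rot_dot n t i j \<alpha> = mat (2*n) (2*n)
     (\<lambda>(r,c). vector_derivative (\<lambda>\<phi>. rot n t i j \<phi> \<alpha> $$ (r,c)) (at 0))"

definition eta :: "nat \<Rightarrow> real" where
  "eta n = 2 / sqrt (4 * (real n)\<^sup>2 - 2 * real n)"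

end

theory Submission
  imports Defs
begin


lemma dim_ctrans[simp]: "dim_row (ctrans X) = dim_col X" "dim_col (ctrans X) = dim_row X"
  by (auto simp: ctrans_def)

lemma ctrans_carrier[simp, intro]: "X \<in> carrier_mat r c \<Longrightarrow> ctrans X \<in> carrier_mat c r"
  by (auto simp: ctrans_def)

lemma index_ctrans[simp]: "i < dim_col X \<Longrightarrow> j < dim_row X \<Longrightarrow> ctrans X $$ (i,j) = cnj (X $$ (j,i))"
  by (auto simp: ctrans_def)

lemma ctrans_mult: assumes "X \<in> carrier_mat a b" "Y \<in> carrier_mat b c"
  shows "ctrans (X*Y) = ctrans Y * ctrans X"
  using assms by (intro eq_matI) (auto simp: scalar_prod_def cnj_sum mult.commute intro!: sum.cong)

lemma ctrans_ctrans[simp]: "ctrans (ctrans X) = X"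
  by (intro eq_matI) auto

lemma rinner_sum: assumes "X \<in> carrier_mat r c" "Y \<in> carrier_mat r c"
  shows "rinner X Y = (\<Sum>k<c. \<Sum>m<r. Re (cnj (X$$(m,k)) * Y$$(m,k)))"
  using assms unfolding rinner_def
  by (auto simp: scalar_prod_def Re_sum atLeast0LessThan intro!: sum.cong)

lemma fro_rinner: assumes "X \<in> carrier_mat r c" shows "fro_norm X = sqrt (rinner X X)"
proof -
  have "\<And>z. (cmod z)\<^sup>2 = Re (cnj z * z)"
    by (metis Re_complex_of_real complex_norm_square mult.commute)
  then show ?thesis using assms unfolding fro_norm_def
    by (simp add: rinner_sum[OF assms assms] sum.swap[of _ "{..<r}"])
qed

lemma rinner_ZZ: assumes Z: "Z \<in> carrier_mat N N" and U: "ctrans Z * Z = 1\<^sub>m N"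
  and X: "X \<in> carrier_mat N c" and Y: "Y \<in> carrier_mat N c"
  shows "rinner (Z*X) (Z*Y) = rinner X Y"
proof -
  have "ctrans (Z*X) * (Z*Y) = ctrans X * ctrans Z * (Z * Y)"
    using Z X Y by (simp add: ctrans_mult[OF Z X])
  also have "\<dots> = ctrans X * (ctrans Z * (Z * Y))"
    using Z X Y by (meson assoc_mult_mat ctrans_carrier mult_carrier_mat)
  also have "\<dots> = ctrans X * (ctrans Z * Z * Y)"
    using Z X Y by (metis assoc_mult_mat ctrans_carrier)
  also have "\<dots> = ctrans X * Y" using X Y U by simp
  finally show ?thesis unfolding rinner_def by simp
qed

lemma rinner_left: assumes Z: "Z \<in> carrier_mat N N" 
  and X: "X \<in> carrier_mat N c" and Y: "Y \<in> carrier_mat N c"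
  shows "rinner X (Z*Y) = rinner (ctrans Z * X) Y"
proof -
  have "ctrans (ctrans Z * X) = ctrans X * Z"
    using Z X by (simp add: ctrans_mult[of _ N N _ c])
  then have "ctrans (ctrans Z * X) * Y = ctrans X * (Z * Y)"
    using Z X Y by (simp add: assoc_mult_mat[of _ c N _ N _ c])
  then show ?thesis unfolding rinner_def by simp
qed

lemma rinner_minus_left: assumes "X \<in> carrier_mat r c" "Y \<in> carrier_mat r c" "K \<in> carrier_mat r c"
  shows "rinner (X - Y) K = rinner X K - rinner Y K"
proof -
  have "X - Y \<in> carrier_mat r c" using assms by auto
  then show ?thesis
  using assms by (simp add: rinner_sum[of _ r c] sum_subtractf[symmetric] algebra_simps)
qed




lemma tri_entry: assumes "X \<in> carrier_mat N N" "A \<in> carrier_mat N N" "Y \<in> carrier_mat N N" "j < N"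
  shows "(X*A*Y)$$(j,j) = (\<Sum>b<N. \<Sum>a<N. X$$(j,a)*A$$(a,b) * Y$$(b,j))"
  using assms apply (simp add: scalar_prod_def atLeast0LessThan sum_distrib_left mult.assoc)
  by (rule sum.swap)

definition BB :: "nat \<Rightarrow> complex mat \<Rightarrow> complex mat \<Rightarrow> complex mat \<Rightarrow> nat \<Rightarrow> complex" where
  "BB N U A V j = (\<Sum>b<N. \<Sum>a<N. cnj (U$$(a,j)) * A$$(a,b) * V$$(b,j))"

lemma expand3: "cnj (z1 + complex_of_real t * u1) * a * (z2 + of_real t * u2) = cnj z1 * a * z2 + of_real t * (cnj u1 * a * z2 + cnj z1 * a * u2) + of_real t^2 * (cnj u1 * a * u2)"
  by (simp add: algebra_simps power2_eq_square)

lemma ftil_expand: assumes Z: "Z \<in> carrier_mat (2*n) (2*n)" and U: "U \<in> carrier_mat (2*n) (2*n)"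
  and A: "A \<in> carrier_mat (2*n) (2*n)"
  shows "ftil n A (Z + complex_of_real t \<cdot>\<^sub>m U) = (\<Sum>j<2*n. (cmod (BB (2*n) Z A Z j
     + of_real t * (BB (2*n) U A Z j + BB (2*n) Z A U j) + of_real t^2 * BB (2*n) U A U j))^2)"
proof -
  let ?X = "Z + complex_of_real t \<cdot>\<^sub>m U"
  have X: "?X \<in> carrier_mat (2*n) (2*n)" using Z U by auto
  have "(ctrans ?X * A * ?X) $$ (j,j) = BB (2*n) Z A Z j
     + of_real t * (BB (2*n) U A Z j + BB (2*n) Z A U j) + of_real t^2 * BB (2*n) U A U j" if j: "j < 2*n" for j
  proof -
    have "(ctrans ?X * A * ?X) $$ (j,j) = (\<Sum>b<2*n. \<Sum>a<2*n. ctrans ?X$$(j,a)*A$$(a,b) * ?X$$(b,j))"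
      by (rule tri_entry[OF ctrans_carrier[OF X] A X j])
    also have "\<dots> = (\<Sum>b<2*n. \<Sum>a<2*n. cnj (Z$$(a,j))*A$$(a,b) * Z$$(b,j) + 
       of_real t * (cnj (U$$(a,j))*A$$(a,b) * Z$$(b,j) + cnj (Z$$(a,j))*A$$(a,b) * U$$(b,j)) +
       of_real t^2 * (cnj (U$$(a,j))*A$$(a,b) * U$$(b,j)))"
    proof (intro sum.cong refl)
      fix a b assume "a \<in> {..<2*n}" "b \<in> {..<2*n}"
      then have "ctrans ?X$$(j,a) = cnj (Z$$(a,j) + of_real t * U$$(a,j))" "?X$$(b,j) = Z$$(b,j) + of_real t * U$$(b,j)"
        using Z U j by auto
      then show "ctrans ?X$$(j,a)*A$$(a,b) * ?X$$(b,j) = cnj (Z$$(a,j))*A$$(a,b) * Z$$(b,j) + 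
       of_real t * (cnj (U$$(a,j))*A$$(a,b) * Z$$(b,j) + cnj (Z$$(a,j))*A$$(a,b) * U$$(b,j)) +
       of_real t^2 * (cnj (U$$(a,j))*A$$(a,b) * U$$(b,j))"
        by (simp only: expand3)
    qed
    also have "\<dots> = BB (2*n) Z A Z j
     + of_real t * (BB (2*n) U A Z j + BB (2*n) Z A U j) + of_real t^2 * BB (2*n) U A U j"
      unfolding BB_def by (simp add: sum.distrib sum_distrib_left distrib_left)
    finally show ?thesis .
  qed
  then show ?thesis unfolding ftil_def by simp
qed

lemma quad_deriv: "((\<lambda>t::real. (cmod (a + of_real t * b + of_real t^2 * c))^2) has_real_derivative 2*Re(cnj a * b)) (at 0)"
proof -
  have e: "(\<lambda>t::real. (cmod (a + of_real t * b + of_real t^2 * c))^2) = (\<lambda>t. (Re a + t*Re b + t^2*Re c)^2 + (Im a + t*Im b + t^2*Im c)^2)"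
    by (auto simp: cmod_power2 simp del: of_real_power simp add: of_real_power[symmetric])
  show ?thesis unfolding e
    by (rule derivative_eq_intros refl)+ (simp add: algebra_simps)
qed

lemma ftil_deriv: assumes Z: "Z \<in> carrier_mat (2*n) (2*n)" and U: "U \<in> carrier_mat (2*n) (2*n)"
  and A: "A \<in> carrier_mat (2*n) (2*n)"
  shows "deriv (\<lambda>t. ftil n A (Z + complex_of_real t \<cdot>\<^sub>m U)) 0 =
    (\<Sum>j<2*n. 2 * Re (cnj (BB (2*n) Z A Z j) * (BB (2*n) U A Z j + BB (2*n) Z A U j)))"
  unfolding ftil_expand[OF Z U A]
  by (rule DERIV_imp_deriv, rule DERIV_sum, rule quad_deriv)

lemma if01_mult[simp]: "(if P then 1 else 0) * (x::complex) = (if P then x else 0)"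
  "x * (if P then 1 else 0) = (if P then x else 0)" "cnj (if P then 1 else 0) = (if P then 1 else 0)"
  by auto

lemma sum_if_const: "(\<Sum>a\<in>S. if P then f a else 0) = (if P then (\<Sum>a\<in>S. f a) else 0)"
  by auto

lemma BB_unit1: assumes "j0 < 2*n" "k0 < 2*n" "l < 2*n"
  shows "BB (2*n) (w \<cdot>\<^sub>m unit_mat n j0 k0) A Z l = (if l = k0 then cnj w * (\<Sum>b<2*n. A$$(j0,b) * Z$$(b,k0)) else 0)"
  using assms by (cases "l = k0") (auto simp: BB_def unit_mat_def sum_distrib_left mult.assoc if_distrib[of cnj] if_distrib[of "\<lambda>x. x * _"] cong: if_cong)

lemma BB_unit2: assumes "j0 < 2*n" "k0 < 2*n" "l < 2*n"
  shows "BB (2*n) Z A (w \<cdot>\<^sub>m unit_mat n j0 k0) l = (if l = k0 then w * (\<Sum>a<2*n. cnj(Z$$(a,k0)) * A$$(a,j0)) else 0)"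
  using assms by (cases "l = k0") (auto simp: BB_def unit_mat_def sum_distrib_left sum_if_const if_distrib[of "\<lambda>x. _ * x"] cong: if_cong intro!: sum.cong)

lemma unit_carrier[simp]: "unit_mat n j k \<in> carrier_mat (2*n) (2*n)"
  by (simp add: unit_mat_def)

lemma deriv_unit: assumes Z: "Z \<in> carrier_mat (2*n) (2*n)" and A: "A \<in> carrier_mat (2*n) (2*n)"
  and j: "j < 2*n" and k: "k < 2*n"
  shows "deriv (\<lambda>t. ftil n A (Z + complex_of_real t \<cdot>\<^sub>m (w \<cdot>\<^sub>m unit_mat n j k))) 0 =
     2 * Re (cnj (BB (2*n) Z A Z k) * (cnj w * (\<Sum>b<2*n. A$$(j,b) * Z$$(b,k)) + w * (\<Sum>a<2*n. cnj(Z$$(a,k)) * A$$(a,j))))"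
proof -
  have U: "w \<cdot>\<^sub>m unit_mat n j k \<in> carrier_mat (2*n) (2*n)" by simp
  let ?P = "(\<Sum>b<2*n. A$$(j,b) * Z$$(b,k))" and ?Q = "(\<Sum>a<2*n. cnj(Z$$(a,k)) * A$$(a,j))"
  have "(\<Sum>l<2*n. 2 * Re (cnj (BB (2*n) Z A Z l) * (BB (2*n) (w \<cdot>\<^sub>m unit_mat n j k) A Z l + BB (2*n) Z A (w \<cdot>\<^sub>m unit_mat n j k) l)))
     = (\<Sum>l<2*n. if l = k then 2 * Re (cnj (BB (2*n) Z A Z k) * (cnj w * ?P + w * ?Q)) else 0)"
    by (rule sum.cong[OF refl]) (simp add: BB_unit1[OF j k] BB_unit2[OF j k])
  also have "\<dots> = 2 * Re (cnj (BB (2*n) Z A Z k) * (cnj w * ?P + w * ?Q))"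
    using k by simp
  finally show ?thesis unfolding ftil_deriv[OF Z U A] .
qed

lemma egrad_alg: "complex_of_real (2 * Re (cnj M * (cnj 1 * P + 1 * Q))) + \<i> * complex_of_real (2 * Re (cnj M * (cnj \<i> * P + \<i> * Q)))
   = 2 * (cnj M * P + M * cnj Q)"
  by (rule complex_eqI) (simp_all add: algebra_simps)

lemma egrad_entry: assumes Z: "Z \<in> carrier_mat (2*n) (2*n)" and A: "A \<in> carrier_mat (2*n) (2*n)"
  and j: "j < 2*n" and k: "k < 2*n"
  shows "egrad n A Z $$ (j,k) = 2 * (cnj (BB (2*n) Z A Z k) * (\<Sum>b<2*n. A$$(j,b) * Z$$(b,k))
     + BB (2*n) Z A Z k * cnj (\<Sum>a<2*n. cnj(Z$$(a,k)) * A$$(a,j)))"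
proof -
  have e1: "(\<lambda>t. ftil n A (Z + complex_of_real t \<cdot>\<^sub>m unit_mat n j k)) = (\<lambda>t. ftil n A (Z + complex_of_real t \<cdot>\<^sub>m (1 \<cdot>\<^sub>m unit_mat n j k)))"
    by (intro ext arg_cong[where f="ftil n A"] arg_cong[where f="\<lambda>X. Z + X"] eq_matI) auto
  have e2: "(\<lambda>t. ftil n A (Z + (\<i> * complex_of_real t) \<cdot>\<^sub>m unit_mat n j k)) = (\<lambda>t. ftil n A (Z + complex_of_real t \<cdot>\<^sub>m (\<i> \<cdot>\<^sub>m unit_mat n j k)))"
    by (intro ext arg_cong[where f="ftil n A"] arg_cong[where f="\<lambda>X. Z + X"] eq_matI) auto
  have "egrad n A Z $$ (j,k) = complex_of_real (deriv (\<lambda>t::real. ftil n A (Z + complex_of_real t \<cdot>\<^sub>m unit_mat n j k)) 0)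
      + \<i> * complex_of_real (deriv (\<lambda>t::real. ftil n A (Z + (\<i> * complex_of_real t) \<cdot>\<^sub>m unit_mat n j k)) 0)"
    unfolding egrad_def using j k by simp
  also have "\<dots> = 2 * (cnj (BB (2*n) Z A Z k) * (\<Sum>b<2*n. A$$(j,b) * Z$$(b,k))
     + BB (2*n) Z A Z k * cnj (\<Sum>a<2*n. cnj(Z$$(a,k)) * A$$(a,j)))"
    unfolding e1 e2 deriv_unit[OF Z A j k] by (rule egrad_alg)
  finally show ?thesis .
qed




definition pp :: "nat \<Rightarrow> nat \<Rightarrow> nat" where "pp n r = (if r < n then r + n else r - n)"
definition sg :: "nat \<Rightarrow> nat \<Rightarrow> complex" where "sg n r = (if r < n then 1 else -1)"

lemma pp_lt[simp]: "r < 2*n \<Longrightarrow> pp n r < 2*n" by (auto simp: pp_def)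
lemma pp_pp[simp]: "r < 2*n \<Longrightarrow> pp n (pp n r) = r" by (auto simp: pp_def)
lemma sg_pp[simp]: "r < 2*n \<Longrightarrow> sg n (pp n r) = - sg n r" by (auto simp: pp_def sg_def)
lemma sg_sq[simp]: "sg n r * sg n r = 1" by (auto simp: sg_def)
lemma cnj_sg[simp]: "cnj (sg n r) = sg n r" by (auto simp: sg_def)

lemma J_mult: assumes "X \<in> carrier_mat (2*n) c" "r < 2*n" "k < c"
  shows "(Jmat n * X) $$ (r,k) = sg n r * X $$ (pp n r, k)"
proof -
  have "(Jmat n * X) $$ (r,k) = (\<Sum>a<2*n. Jmat n $$ (r,a) * X $$ (a,k))"
    using assms by (simp add: Jmat_def scalar_prod_def atLeast0LessThan)
  also have "\<dots> = (\<Sum>a<2*n. if a = pp n r then sg n r * X $$ (a,k) else 0)"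
    using assms by (intro sum.cong refl) (auto simp: Jmat_def pp_def sg_def)
  also have "\<dots> = sg n r * X $$ (pp n r, k)" using assms by simp
  finally show ?thesis .
qed

lemma ctrans_entry: "X \<in> carrier_mat a b \<Longrightarrow> r < b \<Longrightarrow> c < a \<Longrightarrow> ctrans X $$ (r,c) = cnj (X $$ (c,r))"
  by simp

lemma Jmat_carrier[simp]: "Jmat n \<in> carrier_mat (2*n) (2*n)" by (simp add: Jmat_def)
lemma Jmat_dim[simp]: "dim_row (Jmat n) = 2*n" "dim_col (Jmat n) = 2*n" by (simp_all add: Jmat_def)

definition skewham :: "nat \<Rightarrow> complex mat \<Rightarrow> bool" where
 "skewham n K \<longleftrightarrow> K \<in> carrier_mat (2*n) (2*n) \<and> (\<forall>r<2*n. \<forall>c<2*n. K$$(c,r) = - cnj (K$$(r,c)) 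
     \<and> K$$(pp n r, pp n c) = sg n r * sg n c * K$$(r,c))"

lemma skewham_iff: assumes K: "K \<in> carrier_mat (2*n) (2*n)"
  shows "(ctrans K = -K \<and> hamiltonian n K) \<longleftrightarrow> skewham n K"
proof
  assume a: "ctrans K = -K \<and> hamiltonian n K"
  have sk: "K$$(c,r) = - cnj (K$$(r,c))" if "r < 2*n" "c < 2*n" for r c
  proof -
    have "ctrans K $$ (c,r) = (-K) $$ (c,r)" using a by simp
    then show ?thesis using K that by simp
  qed
  have JK: "Jmat n * K \<in> carrier_mat (2*n) (2*n)" using K by (metis Jmat_carrier mult_carrier_mat)
  have h: "- sg n c * K$$(r, pp n c) = sg n r * K$$(pp n r,c)" if r: "r < 2*n" and c: "c < 2*n" for r c
  proof -
    have "ctrans (Jmat n * K) $$ (r,c) = (Jmat n * K) $$ (r,c)" using a unfolding hamiltonian_def by simp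
    then have "cnj ((Jmat n * K) $$ (c,r)) = (Jmat n * K) $$ (r,c)" using ctrans_entry[OF JK r c] by simp
    then have "cnj (sg n c * K$$(pp n c, r)) = sg n r * K$$(pp n r,c)" by (simp only: J_mult[OF K r c] J_mult[OF K c r])
    then show ?thesis using sk[of "pp n c" r] r c by simp
  qed
  have "K$$(pp n r, pp n c) = sg n r * sg n c * K$$(r,c)" if r: "r < 2*n" and c: "c < 2*n" for r c
  proof -
    have "- sg n (pp n c) * K$$(r, pp n (pp n c)) = sg n r * K$$(pp n r, pp n c)" using h[of r "pp n c"] r c by simp
    then have "sg n c * K$$(r, c) = sg n r * K$$(pp n r, pp n c)" using r c by simp
    then have "sg n r * (sg n c * K$$(r, c)) = sg n r * (sg n r * K$$(pp n r, pp n c))" by simp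
    then show ?thesis by (simp add: mult.assoc[symmetric])
  qed
  then show "skewham n K" using K sk unfolding skewham_def by blast
next
  assume s: "skewham n K"
  have sk: "K$$(c,r) = - cnj (K$$(r,c))" "K$$(pp n r, pp n c) = sg n r * sg n c * K$$(r,c)" 
    if "r < 2*n" "c < 2*n" for r c using s that unfolding skewham_def by blast+
  have 1: "ctrans K = -K"
  proof (intro eq_matI)
    fix i j assume "i < dim_row (-K)" "j < dim_col (-K)"
    then have i: "i < 2*n" and j: "j < 2*n" using K by auto
    show "ctrans K $$ (i,j) = (-K) $$ (i,j)" using i j K by (simp add: sk(1)[OF j i])
  qed (use K in auto)
  have JK: "Jmat n * K \<in> carrier_mat (2*n) (2*n)" using K by (metis Jmat_carrier mult_carrier_mat)
  have "ctrans (Jmat n * K) = Jmat n * K"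
  proof (intro eq_matI)
    fix r c assume "r < dim_row (Jmat n * K)" "c < dim_col (Jmat n * K)"
    then have r: "r < 2*n" and c: "c < 2*n" using JK by auto
    have e: "K$$(pp n r, c) = - sg n r * sg n c * K$$(r, pp n c)"
      using sk(2)[of r "pp n c"] r c by simp
    have "ctrans (Jmat n * K) $$ (r,c) = cnj (sg n c * K$$(pp n c, r))" by (simp only: ctrans_entry[OF JK r c] J_mult[OF K c r])
    also have "\<dots> = - sg n c * K$$(r, pp n c)" using sk(1)[of r "pp n c"] r c by simp
    also have "\<dots> = sg n r * K$$(pp n r, c)" unfolding e by (simp add: mult.assoc[symmetric])
    also have "\<dots> = (Jmat n * K) $$ (r,c)" by (simp only: J_mult[OF K r c])
    finally show "ctrans (Jmat n * K) $$ (r,c) = (Jmat n * K) $$ (r,c)" .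
  qed (use JK K in auto)
  then show "ctrans K = -K \<and> hamiltonian n K" using 1 K unfolding hamiltonian_def by auto
qed

lemma tangent_char: "tangent n Z = {Z*K | K. skewham n K}"
proof -
  have "\<And>K. (K \<in> carrier_mat (2*n) (2*n) \<and> ctrans K = -K \<and> hamiltonian n K) \<longleftrightarrow> skewham n K"
    using skewham_iff skewham_def by blast
  then show ?thesis unfolding tangent_def by simp
qed

lemma skewham_diff: assumes "skewham n K1" "skewham n K2" shows "skewham n (K1 - K2)"
proof -
  have c: "K1 \<in> carrier_mat (2*n) (2*n)" "K2 \<in> carrier_mat (2*n) (2*n)" using assms unfolding skewham_def by blast+
  have "(K1 - K2)$$(c,r) = - cnj ((K1 - K2)$$(r,c)) \<and> (K1 - K2)$$(pp n r, pp n c) = sg n r * sg n c * (K1 - K2)$$(r,c)"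
    if "r < 2*n" "c < 2*n" for r c
  proof -
    have "K1$$(c,r) = - cnj (K1$$(r,c))" "K1$$(pp n r, pp n c) = sg n r * sg n c * K1$$(r,c)"
      "K2$$(c,r) = - cnj (K2$$(r,c))" "K2$$(pp n r, pp n c) = sg n r * sg n c * K2$$(r,c)"
      using assms that unfolding skewham_def by blast+
    then show ?thesis using c that by (simp add: right_diff_distrib)
  qed
  moreover have "K1 - K2 \<in> carrier_mat (2*n) (2*n)" using c by (metis minus_carrier_mat)
  ultimately show ?thesis unfolding skewham_def by blast
qed

lemma rinner_zero: assumes X: "X \<in> carrier_mat r c" and z: "rinner X X = 0" shows "X = 0\<^sub>m r c"
proof -
  have e: "\<And>x. Re (cnj x * x) = (cmod x)^2"
    by (metis Re_complex_of_real complex_norm_square mult.commute)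
  have "(\<Sum>k<c. \<Sum>m<r. (cmod (X$$(m,k)))^2) = 0" using z unfolding rinner_sum[OF X X] e .
  then have "\<forall>k\<in>{..<c}. (\<Sum>m<r. (cmod (X$$(m,k)))^2) = 0"
    by (subst (asm) sum_nonneg_eq_0_iff) (auto intro: sum_nonneg)
  then have "\<forall>k<c. \<forall>m<r. (cmod (X$$(m,k)))^2 = 0"
    by (auto simp: sum_nonneg_eq_0_iff)
  then show ?thesis using X by (intro eq_matI) auto
qed

definition Sm :: "complex mat \<Rightarrow> nat \<Rightarrow> nat \<Rightarrow> complex" where
  "Sm W r c = (W$$(r,c) - cnj (W$$(c,r)))/2"
definition Gm :: "nat \<Rightarrow> complex mat \<Rightarrow> complex mat" where
  "Gm n W = mat (2*n) (2*n) (\<lambda>(r,c). (Sm W r c + sg n r * sg n c * Sm W (pp n r) (pp n c))/2)"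

lemma Gm_carrier[simp]: "Gm n W \<in> carrier_mat (2*n) (2*n)" by (simp add: Gm_def)
lemma Gm_entry: "r < 2*n \<Longrightarrow> c < 2*n \<Longrightarrow> Gm n W $$ (r,c) = (Sm W r c + sg n r * sg n c * Sm W (pp n r) (pp n c))/2"
  by (simp add: Gm_def)

lemma Sm_skew: "Sm W c r = - cnj (Sm W r c)" by (simp add: Sm_def field_simps)

lemma sg_alg: "sg n r * sg n c * ((x + sg n r * sg n c * y)/2) = (y + sg n r * sg n c * x)/2"
  by (cases "r<n"; cases "c<n") (simp_all add: sg_def)

lemma sg_alg2: "(- cnj x + sg n c * sg n r * (- cnj y)) / 2 = - cnj ((x + sg n r * sg n c * y) / 2)"
  by (cases "r<n"; cases "c<n") (simp_all add: sg_def field_simps)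

lemma sg4: "sg n m * sg n k * x * (sg n m * sg n k * y) = x * y"
  by (cases "m<n"; cases "k<n") (simp_all add: sg_def)

lemma Gm_skewham: "skewham n (Gm n W)"
proof -
  have "Gm n W $$ (c,r) = - cnj (Gm n W $$ (r,c)) \<and> Gm n W $$ (pp n r, pp n c) = sg n r * sg n c * Gm n W $$ (r,c)"
    if r: "r < 2*n" and c: "c < 2*n" for r c
  proof
    have "Gm n W $$ (c,r) = (- cnj (Sm W r c) + sg n c * sg n r * (- cnj (Sm W (pp n r) (pp n c)))) / 2"
      using r c by (simp only: Gm_entry Sm_skew[of W c r] Sm_skew[of W "pp n c" "pp n r"])
    then show "Gm n W $$ (c,r) = - cnj (Gm n W $$ (r,c))"
      using r c by (simp only: sg_alg2 Gm_entry)
    have "Gm n W $$ (pp n r, pp n c) = (Sm W (pp n r) (pp n c) + sg n r * sg n c * Sm W r c)/2"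
      using r c by (simp add: Gm_entry)
    then show "Gm n W $$ (pp n r, pp n c) = sg n r * sg n c * Gm n W $$ (r,c)"
      using r c by (simp only: sg_alg Gm_entry)
  qed
  then show ?thesis unfolding skewham_def using Gm_carrier by blast
qed

definition TT :: "nat \<Rightarrow> complex mat \<Rightarrow> (nat \<Rightarrow> nat \<Rightarrow> complex) \<Rightarrow> real" where
  "TT N K f = (\<Sum>k<N. \<Sum>m<N. Re (cnj (f m k) * K$$(m,k)))"

lemma TT_cong: "(\<And>m k. m < N \<Longrightarrow> k < N \<Longrightarrow> f m k = g m k) \<Longrightarrow> TT N K f = TT N K g"
  unfolding TT_def by (intro sum.cong refl) auto

lemma TT_add: "TT N K (\<lambda>m k. f m k + g m k) = TT N K f + TT N K g"
  unfolding TT_def by (simp add: algebra_simps sum.distrib)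

lemma TT_diff: "TT N K (\<lambda>m k. f m k - g m k) = TT N K f - TT N K g"
  unfolding TT_def by (simp add: algebra_simps sum_subtractf)

lemma TT_half: "TT N K (\<lambda>m k. f m k / 2) = TT N K f / 2"
  unfolding TT_def by (simp add: sum_divide_distrib)

lemma Re_cnj_swap: "Re (a * cnj b) = Re (cnj a * b)"
  by simp

lemma TT_cnjswap: assumes K: "skewham n K"
  shows "TT (2*n) K (\<lambda>m k. cnj (f k m)) = - TT (2*n) K f"
proof -
  have sk: "K$$(c,r) = - cnj (K$$(r,c))" if "r < 2*n" "c < 2*n" for r c
    using K that unfolding skewham_def by blast
  have "TT (2*n) K (\<lambda>m k. cnj (f k m)) = (\<Sum>k<2*n. \<Sum>m<2*n. Re (f k m * K$$(m,k)))"
    unfolding TT_def by simp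
  also have "\<dots> = (\<Sum>k<2*n. \<Sum>m<2*n. Re (f m k * K$$(k,m)))"
    by (rule sum.swap)
  also have "\<dots> = (\<Sum>k<2*n. \<Sum>m<2*n. - Re (cnj (f m k) * K$$(m,k)))"
  proof (intro sum.cong refl)
    fix k m assume "k \<in> {..<2*n}" "m \<in> {..<2*n}"
    then have "K$$(k,m) = - cnj (K$$(m,k))" using sk by blast
    then show "Re (f m k * K$$(k,m)) = - Re (cnj (f m k) * K$$(m,k))" by simp
  qed
  also have "\<dots> = - TT (2*n) K f" unfolding TT_def by (simp only: sum_negf)
  finally show ?thesis .
qed

lemma sum_pp: "(\<Sum>m<2*n. g (pp n m)) = (\<Sum>m<2*n. g m)"
  by (rule sum.reindex_bij_witness[of _ "pp n" "pp n"]) auto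

lemma TT_pp: assumes K: "skewham n K"
  shows "TT (2*n) K (\<lambda>m k. sg n m * sg n k * f (pp n m) (pp n k)) = TT (2*n) K f"
proof -
  have sk: "K$$(pp n r, pp n c) = sg n r * sg n c * K$$(r,c)" if "r < 2*n" "c < 2*n" for r c
    using K that unfolding skewham_def by blast
  define H where "H m k = Re (cnj (sg n (pp n m) * sg n (pp n k) * f m k) * K$$(pp n m, pp n k))" for m k
  have "TT (2*n) K (\<lambda>m k. sg n m * sg n k * f (pp n m) (pp n k)) = (\<Sum>k<2*n. \<Sum>m<2*n. H (pp n m) (pp n k))"
    unfolding TT_def H_def by (intro sum.cong refl) simp
  also have "\<dots> = (\<Sum>k<2*n. \<Sum>m<2*n. H m (pp n k))"
    apply (rule sum.cong[OF refl])
    subgoal for k using sum_pp[of "\<lambda>m. H m (pp n k)" n] by simp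
    done
  also have "\<dots> = (\<Sum>k<2*n. \<Sum>m<2*n. H m k)"
    by (rule sum_pp[where g = "\<lambda>k. \<Sum>m<2*n. H m k"])
  also have "\<dots> = TT (2*n) K f"
    unfolding TT_def H_def
  proof (intro sum.cong refl)
    fix k m assume "k \<in> {..<2*n}" "m \<in> {..<2*n}"
    then have "cnj (sg n (pp n m) * sg n (pp n k) * f m k) * K$$(pp n m, pp n k) = sg n m * sg n k * cnj (f m k) * (sg n m * sg n k * K$$(m,k))"
      using sk by simp
    then show "Re (cnj (sg n (pp n m) * sg n (pp n k) * f m k) * K$$(pp n m, pp n k)) = Re (cnj (f m k) * K$$(m,k))"
      by (simp only: sg4)
  qed
  finally show ?thesis .
qed

lemma orth: assumes W: "W \<in> carrier_mat (2*n) (2*n)" and K: "skewham n K"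
  shows "rinner (W - Gm n W) K = 0"
proof -
  have Kc: "K \<in> carrier_mat (2*n) (2*n)" using K unfolding skewham_def by blast
  have "rinner (W - Gm n W) K = rinner W K - rinner (Gm n W) K"
    by (rule rinner_minus_left[OF W Gm_carrier Kc])
  also have "rinner W K = TT (2*n) K (\<lambda>m k. W$$(m,k))"
    unfolding rinner_sum[OF W Kc] TT_def ..
  also have "rinner (Gm n W) K = TT (2*n) K (\<lambda>m k. Gm n W $$ (m,k))"
    unfolding rinner_sum[OF Gm_carrier Kc] TT_def ..
  also have "\<dots> = TT (2*n) K (\<lambda>m k. (Sm W m k + sg n m * sg n k * Sm W (pp n m) (pp n k))/2)"
    by (rule TT_cong) (simp add: Gm_entry)
  also have "\<dots> = TT (2*n) K (\<lambda>m k. Sm W m k)"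
    unfolding TT_half TT_add TT_pp[OF K] by simp
  also have "\<dots> = TT (2*n) K (\<lambda>m k. W$$(m,k))"
    unfolding Sm_def TT_half TT_diff TT_cnjswap[OF K, of "\<lambda>m k. W$$(m,k)"] by simp
  finally show ?thesis by simp
qed

lemma egrad_carrier[simp]: "egrad n A Z \<in> carrier_mat (2*n) (2*n)" by (simp add: egrad_def)

lemma grad_eq: assumes Z: "unitary_symplectic n Z"
  shows "grad_f n A Z = Z * Gm n (ctrans Z * egrad n A Z)"
proof -
  have Zc: "Z \<in> carrier_mat (2*n) (2*n)" and U: "ctrans Z * Z = 1\<^sub>m (2*n)"
    using Z unfolding unitary_symplectic_def unitary_def by auto
  define E where "E = egrad n A Z"
  have Ec: "E \<in> carrier_mat (2*n) (2*n)" by (simp add: E_def)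
  define W where "W = ctrans Z * E"
  have Wc: "W \<in> carrier_mat (2*n) (2*n)" unfolding W_def using Zc Ec by (metis ctrans_carrier mult_carrier_mat)
  define G where "G = Gm n W"
  have Gc: "G \<in> carrier_mat (2*n) (2*n)" by (simp add: G_def)
  have ZG: "Z * G \<in> carrier_mat (2*n) (2*n)" using Zc Gc by (metis mult_carrier_mat)
  have orthZ: "rinner (E - Z*G) (Z*K) = 0" if K: "skewham n K" for K
  proof -
    have Kc: "K \<in> carrier_mat (2*n) (2*n)" using K unfolding skewham_def by blast
    have EZ: "E - Z*G \<in> carrier_mat (2*n) (2*n)" using Ec ZG by (metis minus_carrier_mat)
    have "rinner (E - Z*G) (Z*K) = rinner (ctrans Z * (E - Z*G)) K" by (rule rinner_left[OF Zc EZ Kc])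
    also have "ctrans Z * (E - Z*G) = ctrans Z * E - ctrans Z * (Z*G)"
      using Zc Ec ZG by (metis ctrans_carrier mult_minus_distrib_mat)
    also have "ctrans Z * (Z*G) = ctrans Z * Z * G" using Zc Gc by (metis assoc_mult_mat ctrans_carrier)
    also have "\<dots> = G" using U Gc by simp
    finally show ?thesis using orth[OF Wc K] unfolding W_def G_def by simp
  qed
  show ?thesis unfolding grad_f_def
  proof (rule the_equality)
    show "Z*Gm n (ctrans Z * egrad n A Z) \<in> tangent n Z \<and> (\<forall>X\<in>tangent n Z. rinner (egrad n A Z - Z*Gm n (ctrans Z * egrad n A Z)) X = 0)"
      using orthZ Gm_skewham unfolding tangent_char E_def G_def W_def by auto
    fix P assume P: "P \<in> tangent n Z \<and> (\<forall>X\<in>tangent n Z. rinner (egrad n A Z - P) X = 0)"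
    obtain K' where K': "skewham n K'" "P = Z*K'" using P tangent_char by auto
    have K'c: "K' \<in> carrier_mat (2*n) (2*n)" using K' unfolding skewham_def by blast
    have Pc: "P \<in> carrier_mat (2*n) (2*n)" using K'c Zc K' by (metis mult_carrier_mat)
    define D where "D = G - K'"
    have D: "skewham n D" unfolding D_def G_def using skewham_diff Gm_skewham K' by blast
    have Dc: "D \<in> carrier_mat (2*n) (2*n)" using D unfolding skewham_def by blast
    have ZD: "Z*D \<in> carrier_mat (2*n) (2*n)" using Zc Dc by (metis mult_carrier_mat)
    have "Z*D \<in> tangent n Z" using D unfolding tangent_char by auto
    then have 1: "rinner (E - P) (Z*D) = 0" using P E_def by auto
    have 2: "rinner (E - Z*G) (Z*D) = 0" using orthZ[OF D] .
    have "rinner (E - P) (Z*D) - rinner (E - Z*G) (Z*D) = rinner (Z*G) (Z*D) - rinner P (Z*D)"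
      using rinner_minus_left[OF Ec Pc ZD] rinner_minus_left[OF Ec ZG ZD] by simp
    also have "\<dots> = rinner (Z*G - P) (Z*D)" using rinner_minus_left[OF ZG Pc ZD] by simp
    also have "Z*G - P = Z*D" unfolding K' D_def using Zc Gc K'c by (metis mult_minus_distrib_mat)
    finally have "rinner (Z*D) (Z*D) = 0" using 1 2 by simp
    then have "rinner D D = 0" using rinner_ZZ[OF Zc U Dc Dc] by simp
    then have "D = 0\<^sub>m (2*n) (2*n)" using rinner_zero[OF Dc] by blast
    then have "G = K'"
    proof (intro eq_matI)
      fix i j assume D0: "D = 0\<^sub>m (2*n) (2*n)" and ij: "i < dim_row K'" "j < dim_col K'"
      then have "D $$ (i,j) = 0" using K'c by simp
      then show "G $$ (i,j) = K' $$ (i,j)" unfolding D_def using ij Gc K'c by simp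
    qed (use Gc K'c in auto)
    then show "P = Z * Gm n (ctrans Z * egrad n A Z)" using K' unfolding G_def W_def E_def by simp
  qed
qed




lemma mult_entry: assumes "X \<in> carrier_mat a b" "Y \<in> carrier_mat b c" "i < a" "j < c"
  shows "(X*Y)$$(i,j) = (\<Sum>k<b. X$$(i,k)*Y$$(k,j))"
proof -
  have "dim_row X = a" "dim_col X = b" "dim_row Y = b" "dim_col Y = c" using assms by auto
  then show ?thesis using assms by (simp add: scalar_prod_def atLeast0LessThan)
qed

lemma W_diag: assumes Z: "Z \<in> carrier_mat (2*n) (2*n)" and A: "A \<in> carrier_mat (2*n) (2*n)" and k: "k < 2*n"
  shows "Im ((ctrans Z * egrad n A Z) $$ (k,k)) = 0"
proof -
  define M where "M = BB (2*n) Z A Z k"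
  define P where "P r = (\<Sum>b<2*n. A$$(r,b) * Z$$(b,k))" for r
  define Q where "Q r = (\<Sum>a<2*n. cnj(Z$$(a,k)) * A$$(a,r))" for r
  have "(ctrans Z * egrad n A Z) $$ (k,k) = (\<Sum>r<2*n. cnj (Z$$(r,k)) * egrad n A Z $$ (r,k))"
    using Z k by (simp add: mult_entry[OF ctrans_carrier[OF Z] egrad_carrier k k])
  also have "\<dots> = (\<Sum>r<2*n. cnj (Z$$(r,k)) * (2 * (cnj M * P r + M * cnj (Q r))))"
    by (intro sum.cong refl) (simp add: egrad_entry[OF Z A _ k] M_def P_def Q_def)
  also have "\<dots> = 2 * (cnj M * (\<Sum>r<2*n. cnj (Z$$(r,k)) * P r) + M * cnj (\<Sum>r<2*n. Z$$(r,k) * Q r))"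
    by (simp add: sum.distrib sum_distrib_left cnj_sum algebra_simps)
  also have "(\<Sum>r<2*n. cnj (Z$$(r,k)) * P r) = M"
    unfolding M_def BB_def P_def by (simp add: sum_distrib_left mult.assoc, rule sum.swap)
  also have "(\<Sum>r<2*n. Z$$(r,k) * Q r) = M"
    unfolding M_def BB_def Q_def by (simp add: sum_distrib_left mult.commute mult.left_commute)
  finally show ?thesis by simp
qed



lemma vd_if: "(P \<Longrightarrow> (f has_vector_derivative f') F) \<Longrightarrow> (\<not>P \<Longrightarrow> (g has_vector_derivative g') F) \<Longrightarrow>
   ((\<lambda>x. if P then f x else g x) has_vector_derivative (if P then f' else g')) F"
  by (cases P) auto

lemma vd_cos: "((\<lambda>\<phi>. complex_of_real (cos \<phi>)) has_vector_derivative 0) (at 0)"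
  using has_vector_derivative_of_real[OF DERIV_cos[of 0]] by simp
lemma vd_sin: "((\<lambda>\<phi>. complex_of_real (sin \<phi>)) has_vector_derivative 1) (at 0)"
  using has_vector_derivative_of_real[OF DERIV_sin[of 0]] by simp
lemma vd_msin: "((\<lambda>\<phi>. - complex_of_real (sin \<phi>)) has_vector_derivative -1) (at 0)"
  using has_vector_derivative_minus[OF vd_sin] by simp
lemma vd_s: "((\<lambda>\<phi>. a * complex_of_real (sin \<phi>)) has_vector_derivative a) (at 0)"
  using has_vector_derivative_mult_right[OF vd_sin, of a] by simp
lemma vd_ms: "((\<lambda>\<phi>. - (a * complex_of_real (sin \<phi>))) has_vector_derivative - a) (at 0)"
  using has_vector_derivative_minus[OF vd_s] by simp
lemma vd_cs: "((\<lambda>\<phi>. cnj (a * complex_of_real (sin \<phi>))) has_vector_derivative cnj a) (at 0)"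
  using has_vector_derivative_cnj[OF vd_s] by simp
lemma vd_mcs: "((\<lambda>\<phi>. - cnj (a * complex_of_real (sin \<phi>))) has_vector_derivative - cnj a) (at 0)"
  using has_vector_derivative_minus[OF vd_cs] by simp
lemma vd_1: "((\<lambda>\<phi>. 1::complex) has_vector_derivative 0) (at 0)" by (rule has_vector_derivative_const)
lemma vd_0: "((\<lambda>\<phi>. 0::complex) has_vector_derivative 0) (at 0)" by (rule has_vector_derivative_const)

lemmas vd_rules = vd_if vd_cos vd_sin vd_msin vd_s vd_ms vd_cs vd_mcs vd_1 vd_0

lemma rd1: "vector_derivative (\<lambda>\<phi>. rot_entry n R1 i j \<phi> \<alpha> p q) (at 0) =
  (if (p = i \<and> q = i) \<or> (p = n+i \<and> q = n+i) then 0
              else if p = i \<and> q = n+i then - 1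
              else if p = n+i \<and> q = i then 1
              else if p = q then 0 else 0)"
  unfolding rot_entry_def Let_def rot_type.case
  by (rule vector_derivative_at) (intro vd_rules)

lemma rd2: "vector_derivative (\<lambda>\<phi>. rot_entry n R2 i j \<phi> \<alpha> p q) (at 0) =
  (if (p = i \<and> q = i) \<or> (p = j \<and> q = j) \<or> (p = n+i \<and> q = n+i) \<or> (p = n+j \<and> q = n+j) then 0
              else if (p = i \<and> q = j) \<or> (p = n+i \<and> q = n+j) then - cis \<alpha>
              else if (p = j \<and> q = i) \<or> (p = n+j \<and> q = n+i) then cnj (cis \<alpha>)
              else if p = q then 0 else 0)"
  unfolding rot_entry_def Let_def rot_type.case
  by (rule vector_derivative_at) (intro vd_rules)

lemma rd3: "vector_derivative (\<lambda>\<phi>. rot_entry n R3 i j \<phi> \<alpha> p q) (at 0) =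
  (if (p = i \<and> q = i) \<or> (p = j-n \<and> q = j-n) \<or> (p = n+i \<and> q = n+i) \<or> (p = j \<and> q = j) then 0
              else if p = i \<and> q = j then - cis \<alpha>
              else if p = j-n \<and> q = n+i then - cnj (cis \<alpha>)
              else if p = n+i \<and> q = j-n then cis \<alpha>
              else if p = j \<and> q = i then cnj (cis \<alpha>)
              else if p = q then 0 else 0)"
  unfolding rot_entry_def Let_def rot_type.case
  by (rule vector_derivative_at) (intro vd_rules)

definition dm :: "nat \<Rightarrow> nat \<Rightarrow> nat \<Rightarrow> complex \<Rightarrow> complex mat" where
  "dm N a b v = mat N N (\<lambda>(r,c). if r = a \<and> c = b then v else 0)"

lemma dm_carrier[simp]: "dm N a b v \<in> carrier_mat N N" by (simp add: dm_def)
lemma dm_dim[simp]: "dim_row (dm N a b v) = N" "dim_col (dm N a b v) = N" by (simp_all add: dm_def)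

lemma rinner_dm: assumes G: "G \<in> carrier_mat N N" and a: "a < N" and b: "b < N"
  shows "rinner G (dm N a b v) = Re (cnj (G$$(a,b)) * v)"
proof -
  have "rinner G (dm N a b v) = (\<Sum>k<N. \<Sum>m<N. Re (cnj (G$$(m,k)) * dm N a b v $$ (m,k)))"
    by (rule rinner_sum[OF G dm_carrier])
  also have "\<dots> = (\<Sum>k<N. \<Sum>m<N. if k = b then (if m = a then Re (cnj (G$$(a,b)) * v) else 0) else 0)"
    by (intro sum.cong refl) (auto simp: dm_def)
  also have "\<dots> = Re (cnj (G$$(a,b)) * v)" using a b by (simp add: sum_if_const)
  finally show ?thesis .
qed

lemma rinner_add_right: assumes "G \<in> carrier_mat r c" "X \<in> carrier_mat r c" "Y \<in> carrier_mat r c"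
  shows "rinner G (X + Y) = rinner G X + rinner G Y"
proof -
  have "X + Y \<in> carrier_mat r c" using assms by simp
  then show ?thesis using assms by (simp add: rinner_sum[of _ r c] sum.distrib algebra_simps)
qed

lemma rot_dot_entry: assumes "r < 2*n" "c < 2*n"
  shows "rot_dot n t i j \<alpha> $$ (r,c) = vector_derivative (\<lambda>\<phi>. rot_entry n t i j \<phi> \<alpha> (r+1) (c+1)) (at 0)"
  using assms by (simp add: rot_dot_def rot_def)

lemma rot_dot_dim[simp]: "dim_row (rot_dot n t i j \<alpha>) = 2*n" "dim_col (rot_dot n t i j \<alpha>) = 2*n"
  by (simp_all add: rot_dot_def)

lemma rotdot1: assumes "i0 < n"
  shows "rot_dot n R1 (i0+1) (n+(i0+1)) 0 = dm (2*n) i0 (n+i0) (-1) + dm (2*n) (n+i0) i0 1"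
  by (rule eq_matI) (use assms in \<open>auto simp: rot_dot_entry rd1 dm_def\<close>)

lemma rotdot2: assumes "i0 < j0" "j0 < n"
  shows "rot_dot n R2 (i0+1) (j0+1) \<alpha> = dm (2*n) i0 j0 (- cis \<alpha>) + dm (2*n) (n+i0) (n+j0) (- cis \<alpha>)
     + dm (2*n) j0 i0 (cnj (cis \<alpha>)) + dm (2*n) (n+j0) (n+i0) (cnj (cis \<alpha>))"
  by (rule eq_matI) (use assms in \<open>auto simp: rot_dot_entry rd2 dm_def\<close>)

lemma rotdot3: assumes "i0 < j0" "j0 < n"
  shows "rot_dot n R3 (i0+1) (n+(j0+1)) \<alpha> = dm (2*n) i0 (n+j0) (- cis \<alpha>) + dm (2*n) j0 (n+i0) (- cnj (cis \<alpha>))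
     + dm (2*n) (n+i0) j0 (cis \<alpha>) + dm (2*n) (n+j0) i0 (cnj (cis \<alpha>))"
  by (rule eq_matI) (use assms in \<open>auto simp: rot_dot_entry rd3 dm_def\<close>)




lemma Re_arg: "Re (cnj f * cis (Arg f)) = cmod f"
proof -
  have f: "f = complex_of_real (cmod f) * cis (Arg f)" by (metis rcis_cmod_Arg rcis_def)
  have c: "cnj (cis a) * cis a = 1" for a by (simp add: cis_cnj cis_mult)
  have "cnj f * cis (Arg f) = cnj (complex_of_real (cmod f) * cis (Arg f)) * cis (Arg f)"
    using f by simp
  also have "\<dots> = complex_of_real (cmod f) * (cnj (cis (Arg f)) * cis (Arg f))"
    by (simp only: complex_cnj_mult complex_cnj_complex_of_real mult.assoc)
  finally have "cnj f * cis (Arg f) = complex_of_real (cmod f) * (cnj (cis (Arg f)) * cis (Arg f))" .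
  then show ?thesis by (simp add: c)
qed

lemma cmod_real: "Im g = 0 \<Longrightarrow> cmod g = \<bar>Re g\<bar>"
  by (simp add: cmod_def)

locale gsetup =
  fixes n :: nat and G :: "complex mat"
  assumes n: "n \<ge> 1" and Gc: "G \<in> carrier_mat (2*n) (2*n)"
    and gskew: "\<And>r c. r < 2*n \<Longrightarrow> c < 2*n \<Longrightarrow> G$$(c,r) = - cnj (G$$(r,c))"
    and gsym: "\<And>r c. r < 2*n \<Longrightarrow> c < 2*n \<Longrightarrow> G$$(pp n r, pp n c) = sg n r * sg n c * G$$(r,c)"
    and gdiag: "\<And>r. r < 2*n \<Longrightarrow> G$$(r,r) = 0"
begin

lemma v1: assumes i: "i0 < n"
  shows "\<bar>rinner G (rot_dot n R1 (i0+1) (n+(i0+1)) 0)\<bar> = 2 * cmod (G$$(i0,n+i0))"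
proof -
  let ?g = "G$$(i0,n+i0)"
  have a: "G$$(n+i0,i0) = - cnj ?g" using gskew[of i0 "n+i0"] i by simp
  have b: "G$$(n+i0,i0) = - ?g" using gsym[of i0 "n+i0"] i by (simp add: pp_def sg_def add.commute)
  have im: "Im ?g = 0" using a b by (simp add: complex_eq_iff)
  have "rinner G (rot_dot n R1 (i0+1) (n+(i0+1)) 0) = Re (cnj ?g * -1) + Re (cnj (G$$(n+i0,i0)) * 1)"
    unfolding rotdot1[OF i] using i Gc by (simp add: rinner_add_right rinner_dm)
  also have "\<dots> = - 2 * Re ?g" unfolding a by simp
  finally show ?thesis using im by (simp add: cmod_real)
qed

lemma v2: assumes ij: "i0 < j0" "j0 < n"
  shows "\<bar>rinner G (rot_dot n R2 (i0+1) (j0+1) (Arg (G$$(i0,j0))))\<bar> = 4 * cmod (G$$(i0,j0))"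
proof -
  let ?f = "G$$(i0,j0)" and ?s = "cis (Arg (G$$(i0,j0)))"
  have a: "G$$(j0,i0) = - cnj ?f" using gskew[of i0 j0] ij by simp
  have b: "G$$(n+i0,n+j0) = ?f" using gsym[of i0 j0] ij by (simp add: pp_def sg_def add.commute)
  have c: "G$$(n+j0,n+i0) = - cnj ?f" using gsym[of j0 i0] ij a by (simp add: pp_def sg_def add.commute)
  have "rinner G (rot_dot n R2 (i0+1) (j0+1) (Arg ?f)) = Re (cnj ?f * - ?s) + Re (cnj (G$$(n+i0,n+j0)) * - ?s)
      + Re (cnj (G$$(j0,i0)) * cnj ?s) + Re (cnj (G$$(n+j0,n+i0)) * cnj ?s)"
    unfolding rotdot2[OF ij] using ij Gc by (simp add: rinner_add_right rinner_dm)
  also have "\<dots> = - 4 * Re (cnj ?f * ?s)" unfolding a b c by simp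
  also have "\<dots> = - 4 * cmod ?f" by (simp only: Re_arg)
  finally show ?thesis by simp
qed

lemma v3: assumes ij: "i0 < j0" "j0 < n"
  shows "\<bar>rinner G (rot_dot n R3 (i0+1) (n+(j0+1)) (Arg (G$$(i0,n+j0))))\<bar> = 4 * cmod (G$$(i0,n+j0))"
proof -
  let ?f = "G$$(i0,n+j0)" and ?s = "cis (Arg (G$$(i0,n+j0)))"
  have a: "G$$(n+j0,i0) = - cnj ?f" using gskew[of i0 "n+j0"] ij by simp
  have b: "G$$(j0,n+i0) = cnj ?f" using gsym[of "n+j0" i0] ij a by (simp add: pp_def sg_def add.commute)
  have c: "G$$(n+i0,j0) = - ?f" using gsym[of i0 "n+j0"] ij by (simp add: pp_def sg_def add.commute)
  have "rinner G (rot_dot n R3 (i0+1) (n+(j0+1)) (Arg ?f)) = Re (cnj ?f * - ?s) + Re (cnj (G$$(j0,n+i0)) * - cnj ?s)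
      + Re (cnj (G$$(n+i0,j0)) * ?s) + Re (cnj (G$$(n+j0,i0)) * cnj ?s)"
    unfolding rotdot3[OF ij] using ij Gc by (simp add: rinner_add_right rinner_dm)
  also have "\<dots> = - 4 * Re (cnj ?f * ?s)" unfolding a b c by simp
  also have "\<dots> = - 4 * cmod ?f" by (simp only: Re_arg)
  finally show ?thesis by simp
qed

lemma cskew: "r < 2*n \<Longrightarrow> c < 2*n \<Longrightarrow> cmod (G$$(c,r)) = cmod (G$$(r,c))"
  using gskew[of r c] by simp

lemma csym: "r < 2*n \<Longrightarrow> c < 2*n \<Longrightarrow> cmod (G$$(pp n r, pp n c)) = cmod (G$$(r,c))"
  using gsym[of r c] by (simp add: sg_def norm_mult)

lemma bounds:
  assumes T1: "\<And>i0. i0 < n \<Longrightarrow> 2 * cmod (G$$(i0,n+i0)) < T"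
    and T2: "\<And>i0 j0. i0 < j0 \<Longrightarrow> j0 < n \<Longrightarrow> 4 * cmod (G$$(i0,j0)) < T"
    and T3: "\<And>i0 j0. i0 < j0 \<Longrightarrow> j0 < n \<Longrightarrow> 4 * cmod (G$$(i0,n+j0)) < T"
  shows "(\<Sum>r<2*n. \<Sum>c<2*n. (cmod (G$$(r,c)))^2) < real (n*(n+1)) * T^2 / 4"
proof -
  have key: "4 * cmod (G$$(r,c)) < T" if r: "r < n" and c: "c < 2*n" and rc: "r \<noteq> c" "c \<noteq> r + n" for r c
  proof (cases "c < n")
    case True
    show ?thesis
    proof (cases "r < c")
      case True then show ?thesis using T2[of r c] \<open>c < n\<close> by simp
    next
      case False then have "c < r" using rc by simp
      then show ?thesis using T2[of c r] r cskew[of r c] c by simp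
    qed
  next
    case False
    define c' where "c' = c - n"
    have cc: "c = n + c'" "c' < n" "c' \<noteq> r" using False c rc unfolding c'_def by auto
    show ?thesis
    proof (cases "r < c'")
      case True then show ?thesis using T3[of r c'] cc by simp
    next
      case False then have "c' < r" using cc by simp
      then have "4 * cmod (G$$(c', n+r)) < T" using T3[of c' r] r by simp
      moreover have "cmod (G$$(c', n+r)) = cmod (G$$(n+r, c'))" using cskew[of "n+r" c'] r cc by simp
      moreover have "cmod (G$$(pp n (n+r), pp n c')) = cmod (G$$(n+r, c'))" using csym[of "n+r" c'] r cc by simp
      moreover have "pp n (n+r) = r" "pp n c' = c" using cc r by (auto simp: pp_def)
      ultimately show ?thesis by simp
    qed
  qed
  have off: "4 * cmod (G$$(r,c)) < T" if r: "r < 2*n" and c: "c < 2*n" and rc: "r \<noteq> c" "c \<noteq> pp n r" for r c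
  proof (cases "r < n")
    case True
    then have "c \<noteq> r + n" using rc by (simp add: pp_def)
    then show ?thesis using key[OF True c] rc by simp
  next
    case False
    have "pp n r < n" using False r by (simp add: pp_def)
    moreover have "pp n c \<noteq> pp n r"
    proof
      assume "pp n c = pp n r"
      then have "pp n (pp n c) = pp n (pp n r)" by simp
      then show False using rc r c by simp
    qed
    moreover have "pp n c \<noteq> pp n r + n" using rc r c False by (auto simp: pp_def)
    ultimately have "4 * cmod (G$$(pp n r, pp n c)) < T" using key[of "pp n r" "pp n c"] c by simp
    then show ?thesis using csym r c by simp
  qed
  have part: "2 * cmod (G$$(r, pp n r)) < T" if r: "r < 2*n" for r
  proof (cases "r < n")
    case True then show ?thesis using T1[OF True] by (simp add: pp_def add.commute)
  next
    case False
    then have e: "r = n + (r - n)" "r - n < n" using r by auto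
    have "cmod (G$$(r, pp n r)) = cmod (G$$(r - n, r))" using cskew[of "r-n" r] False r by (simp add: pp_def)
    also have "\<dots> = cmod (G$$(r - n, n + (r - n)))" using e by simp
    finally show ?thesis using T1[OF e(2)] by simp
  qed
  have "2 * cmod (G$$(0, n + 0)) < T" using T1[of 0] n by simp
  moreover have "0 \<le> cmod (G$$(0, n + 0))" by simp
  ultimately have Tpos: "T > 0" by linarith
  define a where "a = (T/4)^2"
  define bnd where "bnd r c = (if r = c then 0 else if c = pp n r then 4*a else a)" for r c
  have a4: "(T/2)^2 = 4*a" unfolding a_def by (simp add: power2_eq_square field_simps)
  have sq: "x^2 < y^2" if "0 \<le> x" "x < y" for x y :: real using that by (simp add: power_strict_mono)
  have lt: "(cmod (G$$(r,c)))^2 < bnd r c" if r: "r < 2*n" and cp: "c = pp n r" for r c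
  proof -
    have neq: "pp n r \<noteq> r" using r by (auto simp: pp_def)
    have b: "bnd r c = 4*a" unfolding bnd_def using cp neq by simp
    have "cmod (G$$(r,c)) < T/2" using part[OF r] cp by simp
    then have "(cmod (G$$(r,c)))^2 < (T/2)^2" by (intro sq) auto
    then show ?thesis unfolding a4 b .
  qed
  have le: "(cmod (G$$(r,c)))^2 \<le> bnd r c" if r: "r < 2*n" and c: "c < 2*n" for r c
  proof (cases "r = c")
    case True
    have b: "bnd r c = 0" unfolding bnd_def using True by simp
    show ?thesis unfolding b using gdiag[OF r] True by simp
  next
    case False
    show ?thesis
    proof (cases "c = pp n r")
      case True then show ?thesis using lt[OF r True] by simp
    next
      case False2: False
      have b: "bnd r c = a" unfolding bnd_def using False False2 by simp
      have "cmod (G$$(r,c)) < T/4" using off[OF r c False False2] by simp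
      then have "(cmod (G$$(r,c)))^2 < (T/4)^2" by (intro sq) auto
      then show ?thesis unfolding b a_def by simp
    qed
  qed
  have rowsum: "(\<Sum>c<2*n. bnd r c) = real (2*n+2) * a" if r: "r < 2*n" for r
  proof -
    have neq: "pp n r \<noteq> r" using r by (auto simp: pp_def)
    have "(\<Sum>c<2*n. bnd r c) = (\<Sum>c<2*n. a - (if c = r then a else 0) + (if c = pp n r then 3*a else 0))"
      by (intro sum.cong refl) (use neq in \<open>auto simp: bnd_def\<close>)
    also have "\<dots> = real (2*n) * a - a + 3*a"
      using r by (simp add: sum.distrib sum_subtractf)
    finally show ?thesis by (simp add: algebra_simps)
  qed
  have "(\<Sum>r<2*n. \<Sum>c<2*n. (cmod (G$$(r,c)))^2) < (\<Sum>r<2*n. \<Sum>c<2*n. bnd r c)"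
  proof (rule sum_strict_mono_ex1)
    show "\<forall>r\<in>{..<2*n}. (\<Sum>c<2*n. (cmod (G$$(r,c)))^2) \<le> (\<Sum>c<2*n. bnd r c)"
      using le by (auto intro!: sum_mono)
    have "(\<Sum>c<2*n. (cmod (G$$(0,c)))^2) < (\<Sum>c<2*n. bnd 0 c)"
    proof (rule sum_strict_mono_ex1)
      show "\<forall>c\<in>{..<2*n}. (cmod (G$$(0,c)))^2 \<le> bnd 0 c" using le n by auto
      have "(cmod (G$$(0,n)))^2 < bnd 0 n" using lt[of 0 n] n by (simp add: pp_def)
      then show "\<exists>c\<in>{..<2*n}. (cmod (G$$(0,c)))^2 < bnd 0 c" using n by auto
    qed simp
    then show "\<exists>r\<in>{..<2*n}. (\<Sum>c<2*n. (cmod (G$$(r,c)))^2) < (\<Sum>c<2*n. bnd r c)" using n by auto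
  qed simp
  also have "\<dots> = (\<Sum>r<2*n. real (2*n+2) * a)" by (intro sum.cong refl) (simp add: rowsum)
  also have "\<dots> = real (n*(n+1)) * T^2 / 4" unfolding a_def by (simp add: power_divide algebra_simps)
  finally show ?thesis .
qed

end

theorem lemma4p3:
  fixes n :: nat and A Z :: "complex mat"
  assumes "n \<ge> 1"
    and "hamiltonian n A"
    and "unitary_symplectic n Z"
  shows "\<exists>t i j \<alpha>. admissible n t i j \<alpha> \<and>
           \<bar>rinner (grad_f n A Z) (Z * rot_dot n t i j \<alpha>)\<bar> \<ge> eta n * fro_norm (grad_f n A Z)"
proof -
  have Ac: "A \<in> carrier_mat (2*n) (2*n)" using assms(2) unfolding hamiltonian_def by blast
  have Zc: "Z \<in> carrier_mat (2*n) (2*n)" and U: "ctrans Z * Z = 1\<^sub>m (2*n)"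
    using assms(3) unfolding unitary_symplectic_def unitary_def by auto
  define W where "W = ctrans Z * egrad n A Z"
  define G where "G = Gm n W"
  have Gc: "G \<in> carrier_mat (2*n) (2*n)" by (simp add: G_def)
  have grad: "grad_f n A Z = Z * G" unfolding G_def W_def by (rule grad_eq[OF assms(3)])
  have Gsk: "skewham n G" unfolding G_def by (rule Gm_skewham)
  have Sm0: "Sm W k k = 0" if k: "k < 2*n" for k
  proof -
    have "Im (W$$(k,k)) = 0" unfolding W_def by (rule W_diag[OF Zc Ac k])
    then show ?thesis unfolding Sm_def by (simp add: complex_eq_iff)
  qed
  have gdiag: "G$$(r,r) = 0" if r: "r < 2*n" for r
    unfolding G_def using Gm_entry[of r n r W] r Sm0[OF r] Sm0[of "pp n r"] by simp
  interpret gsetup n G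
  proof unfold_locales
    show "1 \<le> n" using assms(1) .
    show "G \<in> carrier_mat (2*n) (2*n)" by (rule Gc)
    show "\<And>r c. r < 2*n \<Longrightarrow> c < 2*n \<Longrightarrow> G$$(c,r) = - cnj (G$$(r,c))"
      using Gsk unfolding skewham_def by blast
    show "\<And>r c. r < 2*n \<Longrightarrow> c < 2*n \<Longrightarrow> G$$(pp n r, pp n c) = sg n r * sg n c * G$$(r,c)"
      using Gsk unfolding skewham_def by blast
    show "\<And>r. r < 2*n \<Longrightarrow> G$$(r,r) = 0" by (rule gdiag)
  qed
  have rdc: "rot_dot n t i j \<alpha> \<in> carrier_mat (2*n) (2*n)" for t i j \<alpha> by (simp add: rot_dot_def)
  have rin: "rinner (Z*G) (Z * rot_dot n t i j \<alpha>) = rinner G (rot_dot n t i j \<alpha>)" for t i j \<alpha>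
    by (rule rinner_ZZ[OF Zc U Gc rdc])
  have ZGc: "Z*G \<in> carrier_mat (2*n) (2*n)" using Zc Gc by (metis mult_carrier_mat)
  have fro: "fro_norm (Z*G) = fro_norm G"
    unfolding fro_rinner[OF ZGc] fro_rinner[OF Gc] rinner_ZZ[OF Zc U Gc Gc] ..
  define F where "F = (\<Sum>r<2*n. \<Sum>c<2*n. (cmod (G$$(r,c)))^2)"
  have F0: "F \<ge> 0" unfolding F_def by (intro sum_nonneg) auto
  have frF: "fro_norm G = sqrt F" unfolding fro_norm_def F_def using Gc by simp
  show ?thesis
  proof (rule ccontr)
    assume H: "\<not> ?thesis"
    let ?T = "eta n * fro_norm G"
    have H': "\<bar>rinner G (rot_dot n t i j \<alpha>)\<bar> < ?T" if "admissible n t i j \<alpha>" for t i j \<alpha>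
      using H that unfolding grad rin fro by force
    have T1: "2 * cmod (G$$(i0,n+i0)) < ?T" if "i0 < n" for i0
      using H'[of R1 "i0+1" "n+(i0+1)" 0] v1[OF that] that by (simp add: admissible_def)
    have T2: "4 * cmod (G$$(i0,j0)) < ?T" if "i0 < j0" "j0 < n" for i0 j0
      using H'[of R2 "i0+1" "j0+1" "Arg (G$$(i0,j0))"] v2[OF that] that by (simp add: admissible_def)
    have T3: "4 * cmod (G$$(i0,n+j0)) < ?T" if "i0 < j0" "j0 < n" for i0 j0
      using H'[of R3 "i0+1" "n+(j0+1)" "Arg (G$$(i0,n+j0))"] v3[OF that] that by (simp add: admissible_def)
    have B: "F < real (n*(n+1)) * ?T^2 / 4" unfolding F_def by (rule bounds[OF T1 T2 T3])
    define D where "D = 4 * (real n)^2 - 2 * real n"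
    have nr: "real n \<ge> 1" using assms(1) by simp
    have Dpos: "D > 0" unfolding D_def using nr by (simp add: power2_eq_square)
    have Dle: "real (n*(n+1)) \<le> D" unfolding D_def using nr
      by (simp add: power2_eq_square algebra_simps)
    have eta2: "(eta n)^2 = 4 / D" unfolding eta_def D_def[symmetric] using Dpos
      by (simp add: power_divide)
    have T2e: "?T^2 = 4 / D * F" unfolding power_mult_distrib eta2 frF using F0 by simp
    have "real (n*(n+1)) * ?T^2 / 4 = real (n*(n+1)) * F / D" unfolding T2e using Dpos by simp
    also have "\<dots> \<le> F"
    proof -
      have "real (n*(n+1)) * F \<le> D * F" using mult_right_mono[OF Dle F0] .
      then show ?thesis using Dpos by (simp add: divide_le_eq mult.commute)
    qed
    finally show False using B by simp
  qed
qed


end
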